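(* Let $G=(V,E)$ be a connected undirected graph with positive edge weights $w$, and run the distributed algorithm described in the context synchronously at every node. Then for every node $v\in V$ and every node $s\in V\setminus\{v\}$, at any time after the first $2\,\mathcal{D}(G)+1$ phases have been completed, the variable $B[v,s]$ at $v$ equals $\mathsf{bc}_v(s)$.
   Context: Graph notions. $G=(V,E)$ is connected, undirected, with weights $w(e)>0$; $N(v)$ is the set of neighbors of $v$ and $N[v]=N(v)\cup\{v\}$. The length of a path is the sum of its edge weights; $\mathrm{dist}(s,t)$ is the length of a shortest $s$–$t$ path. For $s\neq t$, $\mathrm{maxhop}(s,t)$ is the maximum number of edges of a shortest (minimum-length) $s$–$t$ path, $\mathrm{maxhop}(s,s)=0$, and $\mathcal{D}(G)=\max_{s,t\in V}\mathrm{maxhop}(s,t)$. $\sigma_{s,t}$ is the number of shortest $s$–$t$ paths ($\sigma_{s,s}=1$) and $\sigma_{s,t}(v)$ the number of those passing through $v$ ($\sigma_{s,s}(s)=1$). For $s\in V$, $\mathsf{bc}_v(s)=\sum_{t\neq v}\sigma_{s,t}(v)/\sigma_{s,t}$. Algorithm (at each node $v$). Initialization: for all $t\in V$: $D[t]=+\infty$, $\mathrm{NH}[t]=\mathrm{PH}[t]=\emptyset$, and for all $u\in N[v]$: $B[u,t]=0$, $S[u,t]=0$; then $S[v,v]=1$, $D[v]=0$. Execution proceeds in synchronous phases; in each phase every node $v$ sends, for every $t\in V$, the message $(t,D[t],S[v,t],B[v,t])$ to every neighbor, receives all messages sent to it by its neighbors in that phase, and processes each of them (in arbitrary order) as follows.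 On receipt of $(t,d,s,b)$ from $u\in N(v)$: remove $u$ from $\mathrm{NH}[t]$ and from $\mathrm{PH}[t]$; if $d+w(\{u,v\})<D[t]$ set $D[t]\leftarrow d+w(\{u,v\})$; else if $d+w(\{u,v\})=D[t]$ add $u$ to $\mathrm{NH}[t]$; else if $d-w(\{u,v\})=D[t]$ add $u$ to $\mathrm{PH}[t]$. Then set $S[u,t]\leftarrow s$, $B[u,t]\leftarrow b$; if $t\neq v$ set $S[v,t]\leftarrow\sum_{x\in\mathrm{NH}[t]}S[x,t]$; set $B[v,t]\leftarrow S[v,t]\cdot\sum_{x\in\mathrm{PH}[t]}\frac{B[x,t]+1}{S[x,t]}$ (a term with $S[x,t]=0$ is taken as $0$); finally set $C\leftarrow\sum_{x\neq v}B[v,x]$. *)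

theory Defs
  imports Main "HOL-Library.Extended_Real"
begin

definition weighted_graph :: "('v \<Rightarrow> 'v \<Rightarrow> bool) \<Rightarrow> ('v \<Rightarrow> 'v \<Rightarrow> real) \<Rightarrow> bool" where
  "weighted_graph E w \<longleftrightarrow> (\<forall>u v. E u v \<longrightarrow> E v u) \<and> (\<forall>v. \<not> E v v)
     \<and> (\<forall>u v. E u v \<longrightarrow> w u v = w v u \<and> w u v > 0)"

definition connected_graph :: "('v \<Rightarrow> 'v \<Rightarrow> bool) \<Rightarrow> bool" where
  "connected_graph E \<longleftrightarrow> (\<forall>s t. E\<^sup>*\<^sup>* s t)"

definition is_path :: "('v \<Rightarrow> 'v \<Rightarrow> bool) \<Rightarrow> 'v \<Rightarrow> 'v \<Rightarrow> 'v list \<Rightarrow> bool" where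
  "is_path E s t p \<longleftrightarrow> p \<noteq> [] \<and> hd p = s \<and> last p = t \<and> distinct p \<and> successively E p"

definition plen :: "('v \<Rightarrow> 'v \<Rightarrow> real) \<Rightarrow> 'v list \<Rightarrow> real" where
  "plen w p = sum_list (map (\<lambda>(a, b). w a b) (zip p (tl p)))"

definition gdist :: "('v \<Rightarrow> 'v \<Rightarrow> bool) \<Rightarrow> ('v \<Rightarrow> 'v \<Rightarrow> real) \<Rightarrow> 'v \<Rightarrow> 'v \<Rightarrow> real" where
  "gdist E w s t = Min (plen w ` {p. is_path E s t p})"

definition shortest_paths :: "('v \<Rightarrow> 'v \<Rightarrow> bool) \<Rightarrow> ('v \<Rightarrow> 'v \<Rightarrow> real) \<Rightarrow> 'v \<Rightarrow> 'v \<Rightarrow> 'v list set" where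
  "shortest_paths E w s t = {p. is_path E s t p \<and> plen w p = gdist E w s t}"

definition maxhop :: "('v \<Rightarrow> 'v \<Rightarrow> bool) \<Rightarrow> ('v \<Rightarrow> 'v \<Rightarrow> real) \<Rightarrow> 'v \<Rightarrow> 'v \<Rightarrow> nat" where
  "maxhop E w s t = (if s = t then 0 else Max ((\<lambda>p. length p - 1) ` shortest_paths E w s t))"

definition hopdiam :: "('v::finite \<Rightarrow> 'v \<Rightarrow> bool) \<Rightarrow> ('v \<Rightarrow> 'v \<Rightarrow> real) \<Rightarrow> nat" where
  "hopdiam E w = Max {maxhop E w s t | s t. True}"

definition sigma :: "('v \<Rightarrow> 'v \<Rightarrow> bool) \<Rightarrow> ('v \<Rightarrow> 'v \<Rightarrow> real) \<Rightarrow> 'v \<Rightarrow> 'v \<Rightarrow> nat" where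
  "sigma E w s t = card (shortest_paths E w s t)"

definition sigma_via :: "('v \<Rightarrow> 'v \<Rightarrow> bool) \<Rightarrow> ('v \<Rightarrow> 'v \<Rightarrow> real) \<Rightarrow> 'v \<Rightarrow> 'v \<Rightarrow> 'v \<Rightarrow> nat" where
  "sigma_via E w s t v = card {p \<in> shortest_paths E w s t. v \<in> set p}"

definition bc :: "('v::finite \<Rightarrow> 'v \<Rightarrow> bool) \<Rightarrow> ('v \<Rightarrow> 'v \<Rightarrow> real) \<Rightarrow> 'v \<Rightarrow> 'v \<Rightarrow> real" where
  "bc E w v s = (\<Sum>t\<in>UNIV - {v}. real (sigma_via E w s t v) / real (sigma E w s t))"

text \<open>Local state of a node v: D[t], NH[t], PH[t], S[u,t], B[u,t] (stored for all u, only
  u in N[v] is ever used), and C.\<close>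
record 'v nstate =
  Dv :: "'v \<Rightarrow> ereal"
  NH :: "'v \<Rightarrow> 'v set"
  PH :: "'v \<Rightarrow> 'v set"
  Sv :: "'v \<Rightarrow> 'v \<Rightarrow> real"
  Bv :: "'v \<Rightarrow> 'v \<Rightarrow> real"
  Cv :: real

definition init_state :: "'v \<Rightarrow> 'v nstate" where
  "init_state v = \<lparr> Dv = (\<lambda>t. \<infinity>)(v := 0), NH = (\<lambda>t. {}), PH = (\<lambda>t. {}),
      Sv = (\<lambda>u t. 0)(v := (\<lambda>t. 0)(v := 1)), Bv = (\<lambda>u t. 0), Cv = 0 \<rparr>"

definition upd_dist :: "('v \<Rightarrow> 'v \<Rightarrow> real) \<Rightarrow> 'v \<Rightarrow> 'v \<Rightarrow> 'v \<Rightarrow> ereal \<Rightarrow> 'v nstate \<Rightarrow> 'v nstate" where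
  "upd_dist w v u t d st =
    (let st1 = st\<lparr> NH := (NH st)(t := NH st t - {u}), PH := (PH st)(t := PH st t - {u}) \<rparr>;
         x = d + ereal (w u v)
     in if x < Dv st1 t then st1\<lparr> Dv := (Dv st1)(t := x) \<rparr>
        else if x = Dv st1 t then st1\<lparr> NH := (NH st1)(t := insert u (NH st1 t)) \<rparr>
        else if d - ereal (w u v) = Dv st1 t then st1\<lparr> PH := (PH st1)(t := insert u (PH st1 t)) \<rparr>
        else st1)"

text \<open>Step 2: store S[u,t], B[u,t]; recompute S[v,t] (if t ~= v), B[v,t], and C.
  A term with S[x,t] = 0 is taken as 0.\<close>
definition upd_counts :: "'v::finite \<Rightarrow> 'v \<Rightarrow> 'v \<Rightarrow> real \<Rightarrow> real \<Rightarrow> 'v nstate \<Rightarrow> 'v nstate" where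
  "upd_counts v u t s b st =
    (let st1 = st\<lparr> Sv := (Sv st)(u := (Sv st u)(t := s)), Bv := (Bv st)(u := (Bv st u)(t := b)) \<rparr>;
         st2 = (if t \<noteq> v then st1\<lparr> Sv := (Sv st1)(v := (Sv st1 v)(t := (\<Sum>x\<in>NH st1 t. Sv st1 x t))) \<rparr>
                else st1);
         st3 = st2\<lparr> Bv := (Bv st2)(v := (Bv st2 v)(t :=
                  Sv st2 v t * (\<Sum>x\<in>PH st2 t. if Sv st2 x t = 0 then 0
                                               else (Bv st2 x t + 1) / Sv st2 x t))) \<rparr>
     in st3\<lparr> Cv := (\<Sum>x\<in>UNIV - {v}. Bv st3 v x) \<rparr>)"

definition proc_msg :: "('v::finite \<Rightarrow> 'v \<Rightarrow> real) \<Rightarrow> 'v \<Rightarrow> 'v \<Rightarrow> 'v \<Rightarrow> ereal \<Rightarrow> real \<Rightarrow> real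
    \<Rightarrow> 'v nstate \<Rightarrow> 'v nstate" where
  "proc_msg w v u t d s b st = upd_counts v u t s b (upd_dist w v u t d st)"

text \<open>Node v processes, in the order given by the list xs of pairs (u,t), the messages
  (t, D[t], S[u,t], B[u,t]) that each neighbour u sent based on its state in the global
  state g at the start of the phase.\<close>
definition process_list :: "('v::finite \<Rightarrow> 'v \<Rightarrow> real) \<Rightarrow> ('v \<Rightarrow> 'v nstate) \<Rightarrow> 'v
    \<Rightarrow> ('v \<times> 'v) list \<Rightarrow> 'v nstate \<Rightarrow> 'v nstate" where
  "process_list w g v xs st =
     fold (\<lambda>(u, t) st'. proc_msg w v u t (Dv (g u) t) (Sv (g u) u t) (Bv (g u) u t) st') xs st"

text \<open>Global state after k synchronous phases; ord k v is the (arbitrary) order in which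
  node v processes the messages received in phase k+1.\<close>
primrec exec :: "('v::finite \<Rightarrow> 'v \<Rightarrow> real) \<Rightarrow> (nat \<Rightarrow> 'v \<Rightarrow> ('v \<times> 'v) list) \<Rightarrow> nat
    \<Rightarrow> 'v \<Rightarrow> 'v nstate" where
  "exec w ord 0 = init_state"
| "exec w ord (Suc k) = (\<lambda>v. process_list w (exec w ord k) v (ord k v) (exec w ord k v))"

end

theory Submission
  imports Defs
begin

lemma plen_Nil[simp]: "plen w [] = 0" by (simp add: plen_def)
lemma plen_single[simp]: "plen w [x] = 0" by (simp add: plen_def)
lemma plen_Cons2[simp]: "plen w (x # y # p) = w x y + plen w (y # p)" by (simp add: plen_def)

lemma plen_split: "plen w (xs @ y # zs) = plen w (xs @ [y]) + plen w (y # zs)"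
proof (induction xs)
  case Nil then show ?case by simp
next
  case (Cons a xs) then show ?case by (cases xs) auto
qed

lemma plen_snoc: "p \<noteq> [] \<Longrightarrow> plen w (p @ [y]) = plen w p + w (last p) y"
proof (induction p)
  case Nil then show ?case by simp
next
  case (Cons a p) then show ?case by (cases p) auto
qed

lemma succ_appL: "successively P (xs @ ys) \<Longrightarrow> successively P xs"
  by (simp add: successively_append_iff)
lemma succ_appR: "successively P (xs @ ys) \<Longrightarrow> successively P ys"
  by (simp add: successively_append_iff)

locale G =
  fixes E :: "'v::finite \<Rightarrow> 'v \<Rightarrow> bool" and w :: "'v \<Rightarrow> 'v \<Rightarrow> real"
  assumes wg: "weighted_graph E w" and conn: "connected_graph E"
begin

lemma sym: "E u v \<Longrightarrow> E v u" using wg by (auto simp: weighted_graph_def)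
lemma irr: "\<not> E v v" using wg by (auto simp: weighted_graph_def)
lemma wsym: "E u v \<Longrightarrow> w u v = w v u" using wg by (auto simp: weighted_graph_def)
lemma wpos: "E u v \<Longrightarrow> w u v > 0" using wg by (auto simp: weighted_graph_def)

lemma walk_nonneg: "successively E p \<Longrightarrow> plen w p \<ge> 0"
proof (induction p rule: induct_list012)
  case (3 x y zs) then show ?case using wpos[of x y] by simp
qed auto

lemma walk_to_path:
  "successively E p \<Longrightarrow> p \<noteq> [] \<Longrightarrow> \<exists>q. is_path E (hd p) (last p) q \<and> plen w q \<le> plen w p"
proof (induction "length p" arbitrary: p rule: less_induct)
  case less
  show ?case
  proof (cases "distinct p")
    case True then show ?thesis using less.prems by (auto simp: is_path_def)
  next
    case False
    then obtain xs y ys zs where p: "p = xs @ [y] @ ys @ [y] @ zs"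
      using not_distinct_decomp by blast
    define p' where "p' = xs @ [y] @ zs"
    have l: "length p' < length p" using p p'_def by simp
    have s1: "successively E (xs @ [y])" "successively E (y # zs)"
      using less.prems(1) unfolding p
      using succ_appL[of E "xs @ [y]" "ys @ y # zs"]
        succ_appR[of E "xs @ y # ys" "y # zs"] by auto
    have wk: "successively E p'" unfolding p'_def
      using s1 successively_append_iff[of E "xs @ [y]" zs] by (cases zs) auto
    have ne: "p' \<noteq> []" by (simp add: p'_def)
    have hl: "hd p' = hd p" "last p' = last p" unfolding p p'_def
      by (cases xs; simp)+
    have "plen w p = plen w (xs @ [y]) + plen w (y # ys @ [y]) + plen w (y # zs)"
      unfolding p using plen_split[of w xs y "ys @ y # zs"] plen_split[of w "y # ys" y zs] by simp
    moreover have "plen w (y # ys @ [y]) \<ge> 0"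
      using less.prems(1) unfolding p
      using succ_appR[of E xs "y # ys @ y # zs"] succ_appL[of E "y # ys @ [y]" zs]
      by (intro walk_nonneg) simp
    moreover have "plen w p' = plen w (xs @ [y]) + plen w (y # zs)"
      unfolding p'_def using plen_split[of w xs y zs] by simp
    ultimately have "plen w p' \<le> plen w p" by simp
    with less.hyps[OF l wk ne] hl show ?thesis by force
  qed
qed

lemma walk_exists: "\<exists>p. successively E p \<and> p \<noteq> [] \<and> hd p = a \<and> last p = b"
proof -
  have "E\<^sup>*\<^sup>* a b" using conn by (simp add: connected_graph_def)
  then show ?thesis
  proof (induction rule: rtranclp_induct)
    case base then show ?case by (intro exI[of _ "[a]"]) auto
  next
    case (step y z)
    then obtain p where p: "successively E p" "p \<noteq> []" "hd p = a" "last p = y" by blast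
    then have "successively E (p @ [z])" using step by (auto simp: successively_append_iff)
    then show ?case using p by (intro exI[of _ "p @ [z]"]) auto
  qed
qed

lemma paths_finite: "finite {p. is_path E a b p}"
  by (rule finite_subset[OF _ finite_subset_distinct[OF finite_UNIV]]) (auto simp: is_path_def)

lemma path_exists: "\<exists>p. is_path E a b p"
  using walk_exists[of a b] walk_to_path by blast

lemma gdist_le: "is_path E a b p \<Longrightarrow> gdist E w a b \<le> plen w p"
  unfolding gdist_def using paths_finite by (intro Min_le) auto

lemma gdist_attained: "\<exists>p. is_path E a b p \<and> plen w p = gdist E w a b"
proof -
  have "gdist E w a b \<in> plen w ` {p. is_path E a b p}"
    unfolding gdist_def using paths_finite path_exists by (intro Min_in) auto
  then show ?thesis by auto
qed

lemma walk_gdist: "successively E p \<Longrightarrow> p \<noteq> [] \<Longrightarrow> gdist E w (hd p) (last p) \<le> plen w p"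
  using walk_to_path gdist_le by force

lemma gdist_self: "gdist E w a a = 0"
proof -
  have "gdist E w a a \<le> 0" using gdist_le[of a a "[a]"] by (simp add: is_path_def)
  moreover obtain p where "is_path E a a p" "plen w p = gdist E w a a" using gdist_attained by blast
  then have "gdist E w a a \<ge> 0" using walk_nonneg[of p] by (simp add: is_path_def)
  ultimately show ?thesis by simp
qed

lemma triangle: "E x y \<Longrightarrow> gdist E w a y \<le> gdist E w a x + w x y"
proof -
  assume e: "E x y"
  obtain p where p: "is_path E a x p" "plen w p = gdist E w a x" using gdist_attained by blast
  then have "successively E (p @ [y])" using e by (auto simp: is_path_def successively_append_iff)
  from walk_gdist[OF this] p show ?thesis by (auto simp: is_path_def plen_snoc)
qed

end


locale GS = G E w for E :: "'v::finite \<Rightarrow> 'v \<Rightarrow> bool" and w + fixes s :: 'v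
begin

definition dd where "dd x = gdist E w s x"
definition dg where "dg x y \<longleftrightarrow> E x y \<and> dd x + w x y = dd y"
definition DP where "DP a b = {p. p \<noteq> [] \<and> hd p = a \<and> last p = b \<and> successively dg p}"

lemma dd_s[simp]: "dd s = 0" by (simp add: dd_def gdist_self)

lemma dg_lt: "dg x y \<Longrightarrow> dd x < dd y"
  using wpos[of x y] by (auto simp: dg_def)

lemma dgE: "dg x y \<Longrightarrow> E x y" by (simp add: dg_def)

lemma chain_plen: "successively dg p \<Longrightarrow> p \<noteq> [] \<Longrightarrow> plen w p = dd (last p) - dd (hd p)"
proof (induction p rule: induct_list012)
  case (3 x y zs) then show ?case by (auto simp: dg_def)
qed auto

lemma chain_lt: "successively dg p \<Longrightarrow> length p \<ge> 2 \<Longrightarrow> dd (hd p) < dd (last p)"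
proof (induction p rule: induct_list012)
  case (3 x y zs)
  then show ?case
  proof (cases zs)
    case Nil then show ?thesis using 3 dg_lt by auto
  next
    case (Cons a l)
    then have "dd y < dd (last (y # zs))" using 3 by simp
    moreover have "dd x < dd y" using 3 dg_lt[of x y] by simp
    ultimately show ?thesis by simp
  qed
qed auto

lemma chain_le: "successively dg p \<Longrightarrow> p \<noteq> [] \<Longrightarrow> dd (hd p) \<le> dd (last p)"
proof (induction p rule: induct_list012)
  case (3 x y zs) then show ?case using chain_lt[of "x # y # zs"] by simp
qed auto

lemma chain_distinct: "successively dg p \<Longrightarrow> distinct p"
proof -
  assume a: "successively dg p"
  have "successively (\<lambda>x y. dd x < dd y) p" by (rule successively_mono[OF a]) (rule dg_lt)
  then have "sorted_wrt (\<lambda>x y. dd x < dd y) p"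
    by (subst (asm) successively_conv_sorted_wrt) (auto simp: transp_def)
  then have "sorted_wrt (<) (map dd p)" by (simp add: sorted_wrt_map)
  then have "distinct (map dd p)" by (simp add: strict_sorted_iff)
  then show ?thesis by (simp add: distinct_map)
qed

lemma walk_tele: "successively E p \<Longrightarrow> p \<noteq> [] \<Longrightarrow>
   dd (last p) - dd (hd p) \<le> plen w p \<and> (dd (last p) - dd (hd p) = plen w p \<longrightarrow> successively dg p)"
proof (induction p rule: induct_list012)
  case (3 x y zs)
  have t: "dd y \<le> dd x + w x y" using triangle[of x y s] 3 by (simp add: dd_def)
  from 3 have ih: "dd (last (y # zs)) - dd y \<le> plen w (y # zs) \<and>
     (dd (last (y # zs)) - dd y = plen w (y # zs) \<longrightarrow> successively dg (y # zs))" by simp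
  show ?case
  proof
    show "dd (last (x # y # zs)) - dd (hd (x # y # zs)) \<le> plen w (x # y # zs)" using ih t by simp
    show "dd (last (x # y # zs)) - dd (hd (x # y # zs)) = plen w (x # y # zs) \<longrightarrow> successively dg (x # y # zs)"
    proof
      assume eq: "dd (last (x # y # zs)) - dd (hd (x # y # zs)) = plen w (x # y # zs)"
      then have "dd y = dd x + w x y" "dd (last (y # zs)) - dd y = plen w (y # zs)" using ih t by auto
      then show "successively dg (x # y # zs)" using ih 3 by (auto simp: dg_def)
    qed
  qed
qed auto

lemma SP_eq: "shortest_paths E w s t = DP s t"
proof
  show "shortest_paths E w s t \<subseteq> DP s t"
  proof
    fix p assume "p \<in> shortest_paths E w s t"
    then have p: "is_path E s t p" "plen w p = dd t" by (auto simp: shortest_paths_def dd_def)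
    then have "successively dg p" using walk_tele[of p] by (auto simp: is_path_def)
    then show "p \<in> DP s t" using p by (auto simp: DP_def is_path_def)
  qed
next
  show "DP s t \<subseteq> shortest_paths E w s t"
  proof
    fix p assume "p \<in> DP s t"
    then have p: "p \<noteq> []" "hd p = s" "last p = t" "successively dg p" by (auto simp: DP_def)
    have "successively E p" by (rule successively_mono[OF p(4)]) (rule dgE)
    moreover have "distinct p" using p(4) chain_distinct by blast
    moreover have "plen w p = dd t" using chain_plen[OF p(4,1)] p by simp
    ultimately show "p \<in> shortest_paths E w s t" using p
      by (auto simp: shortest_paths_def is_path_def dd_def)
  qed
qed

lemma DP_finite: "finite (DP a b)"
  by (rule finite_subset[OF _ finite_subset_distinct[OF finite_UNIV]]) (auto simp: DP_def chain_distinct)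

lemma DP_self: "DP a a = {[a]}"
proof
  show "DP a a \<subseteq> {[a]}"
  proof
    fix p assume "p \<in> DP a a"
    then have p: "p \<noteq> []" "hd p = a" "last p = a" "successively dg p" by (auto simp: DP_def)
    have "\<not> length p \<ge> 2" using chain_lt[OF p(4)] p by auto
    then have "length p = 1" using p(1) by (cases p) (auto simp: Suc_le_eq)
    then show "p \<in> {[a]}" using p by (cases p) auto
  qed
qed (auto simp: DP_def)

lemma DP_empty: "dd b < dd a \<Longrightarrow> DP a b = {}"
proof (rule ccontr)
  assume "dd b < dd a" "DP a b \<noteq> {}"
  then obtain p where "p \<noteq> []" "hd p = a" "last p = b" "successively dg p" by (auto simp: DP_def)
  then show False using chain_le[of p] \<open>dd b < dd a\<close> by simp
qed

lemma DP_s_nonempty: "DP s t \<noteq> {}"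
proof -
  obtain p where "is_path E s t p" "plen w p = gdist E w s t" using gdist_attained by blast
  then have "p \<in> shortest_paths E w s t" by (simp add: shortest_paths_def)
  then show ?thesis using SP_eq by auto
qed

lemma card_DP_pos: "card (DP s t) > 0"
  using DP_s_nonempty DP_finite by (simp add: card_gt_0_iff)

lemma sigma_eq: "sigma E w s t = card (DP s t)"
  by (simp add: sigma_def SP_eq)

end


context GS begin

lemma DP_snoc_decomp: "a \<noteq> t \<Longrightarrow> DP a t = (\<Union>x\<in>{x. dg x t}. (\<lambda>q. q @ [t]) ` DP a x)"
proof
  assume at: "a \<noteq> t"
  show "DP a t \<subseteq> (\<Union>x\<in>{x. dg x t}. (\<lambda>q. q @ [t]) ` DP a x)"
  proof
    fix p assume "p \<in> DP a t"
    then have p: "p \<noteq> []" "hd p = a" "last p = t" "successively dg p" by (auto simp: DP_def)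
    define q where "q = butlast p"
    have pq: "p = q @ [t]" using p unfolding q_def by (metis append_butlast_last_id)
    have qne: "q \<noteq> []" using pq p at by auto
    have "successively dg q" "dg (last q) t"
      using p(4) qne unfolding pq by (auto simp: successively_append_iff)
    moreover have "hd q = a" using p(2) qne pq by simp
    ultimately have "q \<in> DP a (last q)" using qne by (simp add: DP_def)
    then show "p \<in> (\<Union>x\<in>{x. dg x t}. (\<lambda>q. q @ [t]) ` DP a x)"
      using pq \<open>dg (last q) t\<close> by blast
  qed
next
  show "(\<Union>x\<in>{x. dg x t}. (\<lambda>q. q @ [t]) ` DP a x) \<subseteq> DP a t"
    by (auto simp: DP_def successively_append_iff)
qed

lemma card_DP_snoc: "a \<noteq> t \<Longrightarrow> card (DP a t) = (\<Sum>x\<in>{x. dg x t}. card (DP a x))"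
proof -
  assume at: "a \<noteq> t"
  have "card (DP a t) = card (\<Union>x\<in>{x. dg x t}. (\<lambda>q. q @ [t]) ` DP a x)"
    using DP_snoc_decomp[OF at] by simp
  also have "\<dots> = (\<Sum>x\<in>{x. dg x t}. card ((\<lambda>q. q @ [t]) ` DP a x))"
  proof (rule card_UN_disjoint)
    show "finite {x. dg x t}" by simp
    show "\<forall>i\<in>{x. dg x t}. finite ((\<lambda>q. q @ [t]) ` DP a i)" using DP_finite by simp
    show "\<forall>i\<in>{x. dg x t}. \<forall>j\<in>{x. dg x t}. i \<noteq> j \<longrightarrow>
      (\<lambda>q. q @ [t]) ` DP a i \<inter> (\<lambda>q. q @ [t]) ` DP a j = {}"
      by (auto simp: DP_def)
  qed
  also have "\<dots> = (\<Sum>x\<in>{x. dg x t}. card (DP a x))"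
    by (intro sum.cong refl card_image) (auto simp: inj_on_def)
  finally show ?thesis .
qed

lemma DP_cons_decomp: "v \<noteq> t \<Longrightarrow> DP v t = (\<Union>x\<in>{x. dg v x}. (\<lambda>r. v # r) ` DP x t)"
proof
  assume at: "v \<noteq> t"
  show "DP v t \<subseteq> (\<Union>x\<in>{x. dg v x}. (\<lambda>r. v # r) ` DP x t)"
  proof
    fix p assume "p \<in> DP v t"
    then have p: "p \<noteq> []" "hd p = v" "last p = t" "successively dg p" by (auto simp: DP_def)
    define r where "r = tl p"
    have pr: "p = v # r" using p unfolding r_def by (metis hd_Cons_tl)
    have rne: "r \<noteq> []" using pr p at by auto
    have "successively dg r" "dg v (hd r)"
      using p(4) rne unfolding pr by (auto simp: successively_Cons)
    moreover have "last r = t" using p(3) rne pr by simp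
    ultimately have "r \<in> DP (hd r) t" using rne by (simp add: DP_def)
    then show "p \<in> (\<Union>x\<in>{x. dg v x}. (\<lambda>r. v # r) ` DP x t)"
      using pr \<open>dg v (hd r)\<close> by blast
  qed
next
  show "(\<Union>x\<in>{x. dg v x}. (\<lambda>r. v # r) ` DP x t) \<subseteq> DP v t"
    by (auto simp: DP_def successively_Cons)
qed

lemma card_DP_cons: "v \<noteq> t \<Longrightarrow> card (DP v t) = (\<Sum>x\<in>{x. dg v x}. card (DP x t))"
proof -
  assume at: "v \<noteq> t"
  have "card (DP v t) = card (\<Union>x\<in>{x. dg v x}. (\<lambda>r. v # r) ` DP x t)"
    using DP_cons_decomp[OF at] by simp
  also have "\<dots> = (\<Sum>x\<in>{x. dg v x}. card ((\<lambda>r. v # r) ` DP x t))"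
  proof (rule card_UN_disjoint)
    show "finite {x. dg v x}" by simp
    show "\<forall>i\<in>{x. dg v x}. finite ((\<lambda>r. v # r) ` DP i t)" using DP_finite by simp
    show "\<forall>i\<in>{x. dg v x}. \<forall>j\<in>{x. dg v x}. i \<noteq> j \<longrightarrow>
      (\<lambda>r. v # r) ` DP i t \<inter> (\<lambda>r. v # r) ` DP j t = {}"
      by (auto simp: DP_def)
  qed
  also have "\<dots> = (\<Sum>x\<in>{x. dg v x}. card (DP x t))"
    by (intro sum.cong refl card_image) (auto simp: inj_on_def)
  finally show ?thesis .
qed

lemma via_A: "q @ tl r \<in> DP s t \<and> butlast q = takeWhile (\<lambda>z. z \<noteq> v) (q @ tl r) \<and> q = butlast q @ [v]
   \<and> r = v # tl r"
if "q \<in> DP s v" "r \<in> DP v t" for q r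
proof -
  from that have q: "q \<noteq> []" "hd q = s" "last q = v" "successively dg q"
    and r: "r \<noteq> []" "hd r = v" "last r = t" "successively dg r" by (auto simp: DP_def)
  have qv: "q = butlast q @ [v]" using q by (metis append_butlast_last_id)
  have rv: "r = v # tl r" using r by (cases r) auto
  have r2: "successively dg (v # tl r)" using r(4) rv by simp
  then have "successively dg (tl r)" "tl r = [] \<or> dg v (hd (tl r))"
    by (auto simp: successively_Cons)
  then have sd: "successively dg (q @ tl r)" using q(4) q(3)
    by (auto simp: successively_append_iff)
  have ht1: "hd (q @ tl r) = s" using q by simp
  have ht2: "last (q @ tl r) = t"
  proof (cases "tl r = []")
    case True then show ?thesis using r q rv by (metis append_Nil2 last_ConsL)
  next
    case False then show ?thesis using r rv by (metis last_ConsR last_appendR)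
  qed
  note ht = ht1 ht2
  have "distinct (q @ tl r)" using sd by (rule chain_distinct)
  then have "distinct (butlast q @ [v])" using qv by simp
  then have "v \<notin> set (butlast q)" by simp
  then have "takeWhile (\<lambda>z. z \<noteq> v) (q @ tl r) = butlast q"
  proof -
    have "q @ tl r = butlast q @ (v # tl r)" using qv by (metis append.assoc append_Cons append_Nil)
    moreover have "takeWhile (\<lambda>z. z \<noteq> v) (butlast q @ (v # tl r)) = butlast q"
      using \<open>v \<notin> set (butlast q)\<close> by (subst takeWhile_append2) auto
    ultimately show ?thesis by metis
  qed
  then show ?thesis using sd ht qv rv by (auto simp: DP_def)
qed

lemma via_bij: "bij_betw (\<lambda>(q, r). q @ tl r) (DP s v \<times> DP v t) {p \<in> DP s t. v \<in> set p}"
proof (rule bij_betwI')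
  fix x y assume x: "x \<in> DP s v \<times> DP v t" and y: "y \<in> DP s v \<times> DP v t"
  obtain q1 r1 where x1: "x = (q1, r1)" by (cases x)
  obtain q2 r2 where y1: "y = (q2, r2)" by (cases y)
  show "((case x of (q, r) \<Rightarrow> q @ tl r) = (case y of (q, r) \<Rightarrow> q @ tl r)) = (x = y)"
  proof
  assume eq: "(case x of (q, r) \<Rightarrow> q @ tl r) = (case y of (q, r) \<Rightarrow> q @ tl r)"
  then have e: "q1 @ tl r1 = q2 @ tl r2" using x1 y1 by simp
  have "q1 \<in> DP s v" "r1 \<in> DP v t" "q2 \<in> DP s v" "r2 \<in> DP v t" using x y x1 y1 by auto
  from via_A[OF this(1,2)] via_A[OF this(3,4)] e have "q1 = q2" by metis
  with e have "tl r1 = tl r2" by simp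
  with via_A \<open>r1 \<in> DP v t\<close> \<open>r2 \<in> DP v t\<close> \<open>q1 \<in> DP s v\<close> have "r1 = r2" by metis
  then show "x = y" using x1 y1 \<open>q1 = q2\<close> by simp
  qed simp
next
  fix x assume "x \<in> DP s v \<times> DP v t"
  then obtain q r where qr: "x = (q, r)" "q \<in> DP s v" "r \<in> DP v t" by auto
  have "q @ tl r \<in> DP s t" "q = butlast q @ [v]" using via_A[OF qr(2,3)] by auto
  moreover have "v \<in> set q" using calculation(2) by (metis in_set_conv_decomp)
  ultimately show "(case x of (q, r) \<Rightarrow> q @ tl r) \<in> {p \<in> DP s t. v \<in> set p}"
    using qr(1) by auto
next
  fix p assume "p \<in> {p \<in> DP s t. v \<in> set p}"
  then have p: "p \<noteq> []" "hd p = s" "last p = t" "successively dg p" "v \<in> set p"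
    by (auto simp: DP_def)
  then obtain xs ys where pe: "p = xs @ v # ys" by (meson split_list)
  have "successively dg ((xs @ [v]) @ ys)" using p(4) pe by simp
  then have s1: "successively dg (xs @ [v])" by (rule succ_appL)
  have s2: "successively dg (v # ys)" using p(4) pe succ_appR by metis
  have h1: "hd (xs @ [v]) = s" using p(2) pe by (cases xs) auto
  have l2: "last (v # ys) = t" using p(3) pe by (cases ys) auto
  have "xs @ [v] \<in> DP s v" using s1 h1 by (simp add: DP_def)
  moreover have "v # ys \<in> DP v t" using s2 l2 by (simp add: DP_def)
  ultimately show "\<exists>x\<in>DP s v \<times> DP v t. p = (case x of (q, r) \<Rightarrow> q @ tl r)"
    using pe by (intro bexI[of _ "(xs @ [v], v # ys)"]) auto
qed


lemma card_via: "sigma_via E w s t v = card (DP s v) * card (DP v t)"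
proof -
  have "sigma_via E w s t v = card {p \<in> DP s t. v \<in> set p}"
    by (simp add: sigma_via_def SP_eq)
  also have "\<dots> = card (DP s v \<times> DP v t)" using bij_betw_same_card[OF via_bij] by simp
  finally show ?thesis by (simp add: card_cartesian_product)
qed

definition Q where "Q v = (\<Sum>t\<in>UNIV. real (card (DP v t)) / real (card (DP s t)))"

lemma DP_self_card[simp]: "card (DP a a) = 1" by (simp add: DP_self)

lemma bc_Q: "bc E w v s = real (card (DP s v)) * Q v - 1"
proof -
  have pos: "real (card (DP s v)) > 0" using card_DP_pos by simp
  have "bc E w v s = (\<Sum>t\<in>UNIV - {v}. real (card (DP s v)) * (real (card (DP v t)) / real (card (DP s t))))"
    unfolding bc_def sigma_eq card_via by (intro sum.cong) auto
  also have "\<dots> = real (card (DP s v)) * (\<Sum>t\<in>UNIV - {v}. real (card (DP v t)) / real (card (DP s t)))"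
    by (simp add: sum_distrib_left)
  also have "(\<Sum>t\<in>UNIV - {v}. real (card (DP v t)) / real (card (DP s t))) = Q v - 1 / real (card (DP s v))"
    unfolding Q_def by (simp add: sum_diff1)
  finally show ?thesis using pos by (simp add: right_diff_distrib)
qed

lemma sum_succ_N: "(\<Sum>x\<in>{x. dg v x}. card (DP x t)) = (if t = v then 0 else card (DP v t))"
proof (cases "t = v")
  case True
  have "DP x v = {}" if "dg v x" for x using DP_empty dg_lt[OF that] by blast
  then show ?thesis using True by simp
next
  case False then show ?thesis using card_DP_cons[of v t] by simp
qed

lemma bc_rec: "bc E w v s = real (card (DP s v)) * (\<Sum>x\<in>{x. dg v x}. (bc E w x s + 1) / real (card (DP s x)))"
proof -
  have pos: "real (card (DP s x)) > 0" for x using card_DP_pos by simp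
  have "(\<Sum>x\<in>{x. dg v x}. (bc E w x s + 1) / real (card (DP s x))) = (\<Sum>x\<in>{x. dg v x}. Q x)"
    using pos by (intro sum.cong refl) (simp add: bc_Q)
  also have "\<dots> = (\<Sum>t\<in>UNIV. (\<Sum>x\<in>{x. dg v x}. real (card (DP x t))) / real (card (DP s t)))"
    unfolding Q_def by (subst sum.swap) (simp add: sum_divide_distrib)
  also have "\<dots> = (\<Sum>t\<in>UNIV. (if t = v then 0 else real (card (DP v t))) / real (card (DP s t)))"
  proof (intro sum.cong refl)
    fix t
    have "(\<Sum>x\<in>{x. dg v x}. real (card (DP x t))) = real (\<Sum>x\<in>{x. dg v x}. card (DP x t))"
      by (simp only: of_nat_sum)
    also have "\<dots> = (if t = v then 0 else real (card (DP v t)))" by (simp only: sum_succ_N) simp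
    finally show "(\<Sum>x\<in>{x. dg v x}. real (card (DP x t))) / real (card (DP s t)) =
      (if t = v then 0 else real (card (DP v t))) / real (card (DP s t))" by simp
  qed
  also have "\<dots> = Q v - 1 / real (card (DP s v))"
  proof -
    have "(\<Sum>t\<in>UNIV. (if t = v then 0 else real (card (DP v t))) / real (card (DP s t)))
       = (\<Sum>t\<in>UNIV. real (card (DP v t)) / real (card (DP s t))) - 1 / real (card (DP s v))"
    proof -
      have "(\<Sum>t\<in>UNIV. real (card (DP v t)) / real (card (DP s t))) =
         real (card (DP v v)) / real (card (DP s v)) + (\<Sum>t\<in>UNIV - {v}. real (card (DP v t)) / real (card (DP s t)))"
        by (rule sum.remove) auto
      moreover have "(\<Sum>t\<in>UNIV. (if t = v then 0 else real (card (DP v t))) / real (card (DP s t))) =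
         (if v = v then 0 else real (card (DP v v))) / real (card (DP s v)) + (\<Sum>t\<in>UNIV - {v}. (if t = v then 0 else real (card (DP v t))) / real (card (DP s t)))"
        by (rule sum.remove) auto
      moreover have "(\<Sum>t\<in>UNIV - {v}. (if t = v then 0 else real (card (DP v t))) / real (card (DP s t)))
          = (\<Sum>t\<in>UNIV - {v}. real (card (DP v t)) / real (card (DP s t)))"
        by (intro sum.cong) auto
      ultimately show ?thesis by simp
    qed
    then show ?thesis by (simp add: Q_def)
  qed
  finally show ?thesis using pos[of v] bc_Q by (simp add: right_diff_distrib)
qed

lemma SP_finite: "finite (shortest_paths E w s x)"
  by (rule finite_subset[OF _ paths_finite[of s x]]) (auto simp: shortest_paths_def)

lemma mh_ge: "p \<in> DP s x \<Longrightarrow> length p - 1 \<le> maxhop E w s x"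
proof (cases "x = s")
  case True
  assume "p \<in> DP s x" then show ?thesis using True DP_self by simp
next
  case False
  assume "p \<in> DP s x"
  then show ?thesis using False SP_finite[of x] SP_eq[of x] by (simp add: maxhop_def)
qed

lemma mh_attained: "\<exists>p\<in>DP s x. length p - 1 = maxhop E w s x"
proof (cases "x = s")
  case True then show ?thesis using DP_self by (simp add: maxhop_def)
next
  case False
  have "maxhop E w s x \<in> (\<lambda>p. length p - 1) ` shortest_paths E w s x"
  proof -
    have "Max ((\<lambda>p. length p - 1) ` shortest_paths E w s x) \<in> (\<lambda>p. length p - 1) ` shortest_paths E w s x"
      using SP_finite[of x] SP_eq[of x] DP_s_nonempty[of x] by (intro Max_in) auto
    then show ?thesis using False by (simp add: maxhop_def)
  qed
  then show ?thesis using SP_eq by auto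
qed

lemma mh_dg: "dg x y \<Longrightarrow> maxhop E w s x < maxhop E w s y"
proof -
  assume d: "dg x y"
  obtain p where p: "p \<in> DP s x" "length p - 1 = maxhop E w s x" using mh_attained by blast
  then have "p @ [y] \<in> DP s y" using d by (auto simp: DP_def successively_append_iff)
  moreover have "p \<noteq> []" using p by (simp add: DP_def)
  moreover have "length p > 0" using \<open>p \<noteq> []\<close> by simp
  ultimately have "length p \<le> maxhop E w s y" using mh_ge[of "p @ [y]" y] by simp
  then show ?thesis using p(2) \<open>length p > 0\<close> by linarith
qed

lemma mh_le: "maxhop E w s x \<le> hopdiam E w"
proof -
  have "finite {maxhop E w a b | a b. True}"
  proof -
    have "{maxhop E w a b | a b. True} = (\<lambda>(a, b). maxhop E w a b) ` UNIV" by auto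
    then show ?thesis by simp
  qed
  then show ?thesis unfolding hopdiam_def by (intro Max_ge) auto
qed

lemma mh_pos: "x \<noteq> s \<Longrightarrow> maxhop E w s x \<ge> 1"
proof -
  assume xs: "x \<noteq> s"
  obtain p where p: "p \<in> DP s x" using DP_s_nonempty by blast
  then have "length p \<ge> 2" using xs chain_lt[of p]
  proof -
    have "p \<noteq> []" "hd p = s" "last p = x" using p by (auto simp: DP_def)
    then show ?thesis using xs by (cases p; cases "tl p") auto
  qed
  then show ?thesis using mh_ge[OF p] by simp
qed

end


lemma UD_D: "Dv (upd_dist w v u t d st) t' =
  (if t' = t \<and> d + ereal (w u v) < Dv st t then d + ereal (w u v) else Dv st t')"
  by (cases "d + ereal (w u v) < Dv st t"; cases "d + ereal (w u v) = Dv st t";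
      cases "d - ereal (w u v) = Dv st t") (simp_all add: upd_dist_def Let_def)

lemma UD_NH: "NH (upd_dist w v u t d st) t' =
  (if t' = t then (if d + ereal (w u v) < Dv st t then NH st t - {u}
     else if d + ereal (w u v) = Dv st t then insert u (NH st t) else NH st t - {u}) else NH st t')"
  by (cases "d + ereal (w u v) < Dv st t"; cases "d + ereal (w u v) = Dv st t";
      cases "d - ereal (w u v) = Dv st t") (simp_all add: upd_dist_def Let_def)


lemma UD_PH: "PH (upd_dist w v u t d st) t' =
  (if t' = t then (if d + ereal (w u v) < Dv st t then PH st t - {u}
     else if d + ereal (w u v) = Dv st t then PH st t - {u}
     else if d - ereal (w u v) = Dv st t then insert u (PH st t) else PH st t - {u}) else PH st t')"
  by (cases "d + ereal (w u v) < Dv st t"; cases "d + ereal (w u v) = Dv st t";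
      cases "d - ereal (w u v) = Dv st t") (simp_all add: upd_dist_def Let_def)

lemma UD_S: "Sv (upd_dist w v u t d st) = Sv st"
  by (cases "d + ereal (w u v) < Dv st t"; cases "d + ereal (w u v) = Dv st t";
      cases "d - ereal (w u v) = Dv st t") (simp_all add: upd_dist_def Let_def)

lemma UD_B: "Bv (upd_dist w v u t d st) = Bv st"
  by (cases "d + ereal (w u v) < Dv st t"; cases "d + ereal (w u v) = Dv st t";
      cases "d - ereal (w u v) = Dv st t") (simp_all add: upd_dist_def Let_def)

lemma UC_D: "Dv (upd_counts v u t sb bb st) = Dv st"
  by (simp add: upd_counts_def Let_def)
lemma UC_NH: "NH (upd_counts v u t sb bb st) = NH st"
  by (simp add: upd_counts_def Let_def)
lemma UC_PH: "PH (upd_counts v u t sb bb st) = PH st"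
  by (simp add: upd_counts_def Let_def)

lemma UC_S: "x \<noteq> v \<Longrightarrow> Sv (upd_counts v u t sb bb st) x t' = (if x = u \<and> t' = t then sb else Sv st x t')"
  by (cases "t = v") (simp_all add: upd_counts_def Let_def)

lemma UC_B: "x \<noteq> v \<Longrightarrow> Bv (upd_counts v u t sb bb st) x t' = (if x = u \<and> t' = t then bb else Bv st x t')"
  by (cases "t = v") (simp_all add: upd_counts_def Let_def)

lemma UC_Sv: "u \<noteq> v \<Longrightarrow> v \<notin> NH st t \<Longrightarrow> Sv (upd_counts v u t sb bb st) v t' =
   (if t' = t \<and> t \<noteq> v then (\<Sum>y\<in>NH st t. Sv (upd_counts v u t sb bb st) y t) else Sv st v t')"
proof -
  assume uv: "u \<noteq> v" and nv: "v \<notin> NH st t"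
  have e: "Sv (upd_counts v u t sb bb st) y t = (if y = u then sb else Sv st y t)" if "y \<in> NH st t" for y
  proof -
    have "y \<noteq> v" using that nv by auto
    then show ?thesis using UC_S[of y v u t sb bb st t] by simp
  qed
  show ?thesis
    using uv not_sym[OF uv] by (cases "t = v") (auto simp: upd_counts_def Let_def intro!: sum.cong dest: e)
qed


lemma UC_Sv_all: "Sv (upd_counts v u t sb bb st) = (let st1 = st\<lparr> Sv := (Sv st)(u := (Sv st u)(t := sb)), Bv := (Bv st)(u := (Bv st u)(t := bb)) \<rparr>
   in Sv (if t \<noteq> v then st1\<lparr> Sv := (Sv st1)(v := (Sv st1 v)(t := (\<Sum>x\<in>NH st1 t. Sv st1 x t))) \<rparr> else st1))"
  by (simp add: upd_counts_def Let_def)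

lemma UC_Bv: "u \<noteq> v \<Longrightarrow> v \<notin> PH st t \<Longrightarrow> Bv (upd_counts v u t sb bb st) v t' =
   (if t' = t then Sv (upd_counts v u t sb bb st) v t * (\<Sum>y\<in>PH st t.
      if Sv (upd_counts v u t sb bb st) y t = 0 then 0
      else (Bv (upd_counts v u t sb bb st) y t + 1) / Sv (upd_counts v u t sb bb st) y t) else Bv st v t')"
proof -
  assume uv: "u \<noteq> v" and nv: "v \<notin> PH st t"
  have e: "Bv (upd_counts v u t sb bb st) y t = (if y = u then bb else Bv st y t)" if "y \<in> PH st t" for y
  proof -
    have "y \<noteq> v" using that nv by auto
    then show ?thesis using UC_B[of y v u t sb bb st t] by simp
  qed
  show ?thesis
    using uv not_sym[OF uv] nv by (cases "t = v") (auto simp: upd_counts_def Let_def intro!: sum.cong dest: e)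
qed


lemma PM_D: "Dv (proc_msg w v u t d sb bb st) t' =
  (if t' = t \<and> d + ereal (w u v) < Dv st t then d + ereal (w u v) else Dv st t')"
  by (simp add: proc_msg_def UC_D UD_D)

lemma PM_NH: "NH (proc_msg w v u t d sb bb st) t' =
  (if t' = t then (if d + ereal (w u v) < Dv st t then NH st t - {u}
     else if d + ereal (w u v) = Dv st t then insert u (NH st t) else NH st t - {u}) else NH st t')"
  by (simp add: proc_msg_def UC_NH UD_NH)

lemma PM_PH: "PH (proc_msg w v u t d sb bb st) t' =
  (if t' = t then (if d + ereal (w u v) < Dv st t then PH st t - {u}
     else if d + ereal (w u v) = Dv st t then PH st t - {u}
     else if d - ereal (w u v) = Dv st t then insert u (PH st t) else PH st t - {u}) else PH st t')"
  by (simp add: proc_msg_def UC_PH UD_PH)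

lemma PM_S: "x \<noteq> v \<Longrightarrow> Sv (proc_msg w v u t d sb bb st) x t' = (if x = u \<and> t' = t then sb else Sv st x t')"
  by (simp add: proc_msg_def UC_S UD_S)

lemma PM_B: "x \<noteq> v \<Longrightarrow> Bv (proc_msg w v u t d sb bb st) x t' = (if x = u \<and> t' = t then bb else Bv st x t')"
  by (simp add: proc_msg_def UC_B UD_B)

lemma PM_Sv: "u \<noteq> v \<Longrightarrow> v \<notin> NH (proc_msg w v u t d sb bb st) t \<Longrightarrow>
  Sv (proc_msg w v u t d sb bb st) v t' =
   (if t' = t \<and> t \<noteq> v then (\<Sum>y\<in>NH (proc_msg w v u t d sb bb st) t. Sv (proc_msg w v u t d sb bb st) y t) else Sv st v t')"
  unfolding proc_msg_def using UC_Sv[of u v "upd_dist w v u t d st" t sb bb t'] by (simp add: UC_NH UD_S)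

lemma PM_Bv: "u \<noteq> v \<Longrightarrow> v \<notin> PH (proc_msg w v u t d sb bb st) t \<Longrightarrow>
  Bv (proc_msg w v u t d sb bb st) v t' =
   (if t' = t then Sv (proc_msg w v u t d sb bb st) v t * (\<Sum>y\<in>PH (proc_msg w v u t d sb bb st) t.
      if Sv (proc_msg w v u t d sb bb st) y t = 0 then 0
      else (Bv (proc_msg w v u t d sb bb st) y t + 1) / Sv (proc_msg w v u t d sb bb st) y t) else Bv st v t')"
  unfolding proc_msg_def using UC_Bv[of u v "upd_dist w v u t d st" t sb bb t'] by (simp add: UC_PH UD_B)

lemma fold_inv: "(\<And>x st. x \<in> set xs \<Longrightarrow> P st \<Longrightarrow> P (f x st)) \<Longrightarrow> P st \<Longrightarrow> P (fold f xs st)"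
  by (induction xs arbitrary: st) auto

lemma fold_est: "(\<And>x st. x \<in> set xs \<Longrightarrow> P st \<Longrightarrow> P (f x st)) \<Longrightarrow> (\<And>st. P (f x0 st)) \<Longrightarrow> x0 \<in> set xs
   \<Longrightarrow> P (fold f xs st)"
proof (induction xs arbitrary: st)
  case (Cons a xs)
  show ?case
  proof (cases "x0 = a")
    case True
    then show ?thesis using Cons.prems fold_inv[of xs P f "f a st"] by simp
  next
    case False
    then show ?thesis using Cons by simp
  qed
qed simp


locale ALG = GS E w s for E :: "'v::finite \<Rightarrow> 'v \<Rightarrow> bool" and w s +
  fixes ord :: "nat \<Rightarrow> 'v \<Rightarrow> ('v \<times> 'v) list"
  assumes ordok: "\<And>k' v'. distinct (ord k' v') \<and> set (ord k' v') = {(u, t). E v' u}"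
begin

abbreviation g where "g k \<equiv> exec w ord k"

definition stp where "stp gg v = (\<lambda>(u, t) st'. proc_msg w v u t (Dv (gg u) t) (Sv (gg u) u t) (Bv (gg u) u t) st')"

lemma process_list_fold: "process_list w gg v xs st = fold (stp gg v) xs st"
  by (simp add: process_list_def stp_def)

definition pst where "pst k v j = fold (stp (g k) v) (take j (ord k v)) (g k v)"

lemma g_Suc: "g (Suc k) v = pst k v (length (ord k v))"
  by (simp add: pst_def process_list_fold)

lemma pst_0: "pst k v 0 = g k v" by (simp add: pst_def)

lemma set_ord: "(u, t) \<in> set (ord k v) \<longleftrightarrow> E v u" using ordok by auto

lemma set_take_ord: "(u, t) \<in> set (take j (ord k v)) \<Longrightarrow> E v u"
  using set_ord in_set_takeD by fastforce

definition wf where "wf v st \<longleftrightarrow> (\<forall>t. NH st t \<subseteq> {u. E v u} \<and> PH st t \<subseteq> {u. E v u})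
   \<and> (s \<noteq> v \<longrightarrow> Sv st v s = (\<Sum>y\<in>NH st s. Sv st y s))
   \<and> Bv st v s = Sv st v s * (\<Sum>y\<in>PH st s. if Sv st y s = 0 then 0 else (Bv st y s + 1) / Sv st y s)
   \<and> (v = s \<longrightarrow> Sv st v s = 1)"

lemma wf_init: "wf v (init_state v)"
  by (auto simp: wf_def init_state_def)

lemma wf_step:
  assumes "wf v st" "E v u"
  shows "wf v (proc_msg w v u t d sb bb st)"
proof -
  let ?st = "proc_msg w v u t d sb bb st"
  have uv: "u \<noteq> v" using assms(2) irr by auto
  have W1: "\<forall>t. NH ?st t \<subseteq> {u. E v u} \<and> PH ?st t \<subseteq> {u. E v u}"
    using assms unfolding wf_def by (auto simp: PM_NH PM_PH split: if_splits)
  then have nv: "v \<notin> NH ?st t'" "v \<notin> PH ?st t'" for t' using irr by auto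
  have nv0: "v \<notin> NH st t'" "v \<notin> PH st t'" for t' using assms(1) irr unfolding wf_def by auto
  have W2: "Sv ?st v s = (\<Sum>y\<in>NH ?st s. Sv ?st y s)" if "s \<noteq> v"
  proof (cases "t = s")
    case True
    have "Sv ?st v t = (\<Sum>y\<in>NH ?st t. Sv ?st y t)"
      using PM_Sv[OF uv nv(1), where t'=t] that True by simp
    then show ?thesis unfolding True .
  next
    case False
    have "Sv ?st v s = Sv st v s" using PM_Sv[OF uv nv(1)] False by simp
    also have "\<dots> = (\<Sum>y\<in>NH st s. Sv st y s)" using assms(1) that by (simp add: wf_def)
    also have "\<dots> = (\<Sum>y\<in>NH ?st s. Sv ?st y s)"
    proof (rule sum.cong)
      show "NH st s = NH ?st s" using False by (simp add: PM_NH)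
    next
      fix y assume "y \<in> NH ?st s"
      then have "y \<noteq> v" using nv by auto
      then show "Sv st y s = Sv ?st y s" using PM_S[OF \<open>y \<noteq> v\<close>, of w u t d sb bb st s] False by auto
    qed
    finally show ?thesis .
  qed
  have W3: "Bv ?st v s = Sv ?st v s * (\<Sum>y\<in>PH ?st s. if Sv ?st y s = 0 then 0 else (Bv ?st y s + 1) / Sv ?st y s)"
  proof (cases "t = s")
    case True
    have "Bv ?st v t = Sv ?st v t * (\<Sum>y\<in>PH ?st t. if Sv ?st y t = 0 then 0 else (Bv ?st y t + 1) / Sv ?st y t)"
      using PM_Bv[OF uv nv(2), where t'=t] by simp
    then show ?thesis unfolding True .
  next
    case False
    have "Bv ?st v s = Bv st v s" using PM_Bv[OF uv nv(2)] False by simp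
    also have "\<dots> = Sv st v s * (\<Sum>y\<in>PH st s. if Sv st y s = 0 then 0 else (Bv st y s + 1) / Sv st y s)"
      using assms(1) by (simp add: wf_def)
    also have "\<dots> = Sv ?st v s * (\<Sum>y\<in>PH ?st s. if Sv ?st y s = 0 then 0 else (Bv ?st y s + 1) / Sv ?st y s)"
    proof (intro arg_cong2[where f="(*)"] sum.cong)
      show "Sv st v s = Sv ?st v s" using False PM_Sv[OF uv nv(1), where t'=s] by auto
      show "PH st s = PH ?st s" using False by (simp add: PM_PH)
    next
      fix y assume "y \<in> PH ?st s"
      then have "y \<noteq> v" using nv by auto
      then show "(if Sv st y s = 0 then 0 else (Bv st y s + 1) / Sv st y s) =
        (if Sv ?st y s = 0 then 0 else (Bv ?st y s + 1) / Sv ?st y s)"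
        using PM_S[OF \<open>y \<noteq> v\<close>, of w u t d sb bb st s] PM_B[OF \<open>y \<noteq> v\<close>, of w u t d sb bb st s] False by auto
    qed
    finally show ?thesis .
  qed
  have W4: "Sv ?st v s = 1" if "v = s"
    using PM_Sv[OF uv nv(1)] that assms(1) by (auto simp: wf_def)
  show ?thesis using W1 W2 W3 W4 by (simp add: wf_def)
qed

lemma wf_fold: "wf v st \<Longrightarrow> (\<And>u t. (u, t) \<in> set xs \<Longrightarrow> E v u) \<Longrightarrow> wf v (fold (stp gg v) xs st)"
  by (rule fold_inv[where P="wf v"]) (auto simp: stp_def intro: wf_step)

lemma wf_all: "wf v (pst k v j)"
proof (induction k arbitrary: v j)
  case 0
  show ?case unfolding pst_def by (rule wf_fold) (auto simp: wf_init dest: set_take_ord)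
next
  case (Suc k)
  have "wf v (g (Suc k) v)" by (subst g_Suc) (rule Suc.IH)
  then show ?case unfolding pst_def by (rule wf_fold) (auto dest: set_take_ord)
qed

end


context ALG begin

lemma D_step_mono: "Dv (proc_msg w v u t d sb bb st) s \<le> Dv st s"
  by (auto simp: PM_D intro: less_imp_le)

lemma D_fold_mono: "Dv (fold (stp gg v) xs st) s \<le> Dv st s"
proof (induction xs arbitrary: st)
  case (Cons a xs)
  have "Dv (stp gg v a st) s \<le> Dv st s" by (cases a) (simp add: stp_def D_step_mono)
  then show ?case using Cons[of "stp gg v a st"] by simp
qed simp

lemma dd_nonneg: "dd x \<ge> 0"
proof -
  obtain p where "p \<in> DP s x" using DP_s_nonempty by blast
  then have "plen w p = dd x" "successively E p" using chain_plen[of p]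
    by (auto simp: DP_def intro: successively_mono dgE)
  then show ?thesis using walk_nonneg by metis
qed

lemma D_step_lb:
  assumes "Dv st s \<ge> ereal (dd v)" "E v u" "t = s \<longrightarrow> d \<ge> ereal (dd u)"
  shows "Dv (proc_msg w v u t d sb bb st) s \<ge> ereal (dd v)"
proof (cases "t = s \<and> d + ereal (w u v) < Dv st t")
  case True
  then have "d \<ge> ereal (dd u)" using assms by simp
  then have "d + ereal (w u v) \<ge> ereal (dd u) + ereal (w u v)" by (metis add_right_mono)
  moreover have "dd v \<le> dd u + w u v" using triangle[of u v s] sym[OF assms(2)] by (simp add: dd_def)
  ultimately have "d + ereal (w u v) \<ge> ereal (dd v)" by (metis ereal_less_eq(3) order_trans plus_ereal.simps(1))
  then show ?thesis using True assms(1) by (auto simp: PM_D)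
next
  case False then show ?thesis using assms by (auto simp: PM_D)
qed

lemma D_fold_lb:
  assumes "Dv st s \<ge> ereal (dd v)" "\<And>u t. (u, t) \<in> set xs \<Longrightarrow> E v u" "\<And>u. Dv (gg u) s \<ge> ereal (dd u)"
  shows "Dv (fold (stp gg v) xs st) s \<ge> ereal (dd v)"
  by (rule fold_inv[where P="\<lambda>st. Dv st s \<ge> ereal (dd v)"]) (use assms in \<open>auto simp: stp_def intro!: D_step_lb\<close>)

lemma D_init_lb: "Dv (init_state v) s \<ge> ereal (dd v)"
proof -
  have e: "Dv (init_state v) s = (if v = s then 0 else \<infinity>)" by (simp add: init_state_def)
  show ?thesis
  proof (cases "v = s")
    case True then show ?thesis using e dd_s by simp
  next
    case False then show ?thesis using e by simp
  qed
qed

lemma D_lb_g: "Dv (g k v) s \<ge> ereal (dd v)"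
proof (induction k arbitrary: v)
  case 0 then show ?case using D_init_lb by simp
next
  case (Suc k)
  show ?case unfolding g_Suc pst_def by (rule D_fold_lb) (use Suc in \<open>auto simp: set_ord dest: set_take_ord\<close>)
qed

lemma D_lb: "Dv (pst k v j) s \<ge> ereal (dd v)"
  unfolding pst_def by (rule D_fold_lb) (use D_lb_g in \<open>auto dest: set_take_ord\<close>)

lemma D_ub_g: "successively E p \<Longrightarrow> p \<noteq> [] \<Longrightarrow> hd p = s \<Longrightarrow> length p \<le> k + 1 \<Longrightarrow>
   Dv (g k (last p)) s \<le> ereal (plen w p)"
proof (induction k arbitrary: p)
  case 0
  then have "p = [s]" by (cases p) auto
  then show ?case by (simp add: init_state_def)
next
  case (Suc k)
  show ?case
  proof (cases "length p \<le> k + 1")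
    case True
    then have "Dv (g k (last p)) s \<le> ereal (plen w p)" using Suc by simp
    moreover have "Dv (g (Suc k) (last p)) s \<le> Dv (g k (last p)) s"
      unfolding g_Suc pst_def by (rule D_fold_mono)
    ultimately show ?thesis by simp
  next
    case False
    define q where "q = butlast p"
    define v where "v = last p"
    have pq: "p = q @ [v]" using Suc.prems unfolding q_def v_def by (metis append_butlast_last_id)
    have qne: "q \<noteq> []" using False pq by auto
    have sq: "successively E q" "E (last q) v" using Suc.prems(1) qne unfolding pq
      by (auto simp: successively_append_iff)
    have hq: "hd q = s" using Suc.prems(3) qne pq by simp
    have lq: "length q \<le> k + 1" using Suc.prems(4) pq by simp
    have ih: "Dv (g k (last q)) s \<le> ereal (plen w q)" using Suc.IH[OF sq(1) qne hq lq] .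
    have plp: "plen w p = plen w q + w (last q) v" using pq qne plen_snoc by simp
    have mem: "(last q, s) \<in> set (ord k v)" using set_ord sym[OF sq(2)] by simp
    have "Dv (fold (stp (g k) v) (ord k v) (g k v)) s \<le> Dv (g k (last q)) s + ereal (w (last q) v)"
    proof (rule fold_est[where P="\<lambda>st. Dv st s \<le> Dv (g k (last q)) s + ereal (w (last q) v)", OF _ _ mem])
      fix x and st :: "'v nstate" assume "Dv st s \<le> Dv (g k (last q)) s + ereal (w (last q) v)"
      then show "Dv (stp (g k) v x st) s \<le> Dv (g k (last q)) s + ereal (w (last q) v)"
      proof (cases x)
        case (Pair a b)
        have "Dv (stp (g k) v x st) s \<le> Dv st s" using D_step_mono by (simp add: stp_def Pair)
        then show ?thesis using \<open>Dv st s \<le> _\<close> by (rule order_trans)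
      qed
    next
      fix st :: "'v nstate" show "Dv (stp (g k) v (last q, s) st) s \<le> Dv (g k (last q)) s + ereal (w (last q) v)"
        by (auto simp: stp_def PM_D not_less)
    qed
    also have "\<dots> \<le> ereal (plen w q) + ereal (w (last q) v)" using ih by (rule add_right_mono)
    also have "\<dots> = ereal (plen w p)" using plp by simp
    finally show ?thesis unfolding v_def[symmetric] g_Suc pst_def by simp
  qed
qed

lemma D_correct_g: "maxhop E w s v \<le> k \<Longrightarrow> Dv (g k v) s = ereal (dd v)"
proof -
  assume a: "maxhop E w s v \<le> k"
  obtain p where p: "p \<in> DP s v" using DP_s_nonempty by blast
  then have pp: "p \<noteq> []" "hd p = s" "last p = v" "successively dg p" by (auto simp: DP_def)
  have "successively E p" using pp(4) by (rule successively_mono) (rule dgE)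
  moreover have "length p \<le> k + 1" using mh_ge[OF p] a pp(1) by linarith
  ultimately have "Dv (g k v) s \<le> ereal (plen w p)" using D_ub_g[of p k] pp by simp
  moreover have "plen w p = dd v" using chain_plen[OF pp(4,1)] pp by simp
  ultimately show ?thesis using D_lb_g[where k=k and v=v] by simp
qed

lemma D_correct: "maxhop E w s v \<le> k \<Longrightarrow> Dv (pst k v j) s = ereal (dd v)"
  using D_correct_g[where v=v and k=k] D_lb[where k=k and v=v and j=j] D_fold_mono[of "g k" v "take j (ord k v)" "g k v"]
  by (simp add: pst_def)

end


context ALG begin

lemma step_s:
  assumes "E v u" "Dv st s = ereal (dd v)" "d \<ge> ereal (dd u)"
  shows "Dv (proc_msg w v u s d sb bb st) s = ereal (dd v)"
    and "NH (proc_msg w v u s d sb bb st) s = (NH st s - {u}) \<union> (if d = ereal (dd u) \<and> dg u v then {u} else {})"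
    and "d = ereal (dd u) \<Longrightarrow> PH (proc_msg w v u s d sb bb st) s = (PH st s - {u}) \<union> (if dg v u then {u} else {})"
proof -
  have euv: "E u v" using sym[OF assms(1)] .
  have tri: "dd v \<le> dd u + w u v" using triangle[OF euv, of s] by (simp add: dd_def)
  have wp: "w u v > 0" using wpos[OF euv] .
  have ws: "w v u = w u v" using wsym[OF euv] by simp
  obtain r where r: "d = ereal r \<and> r \<ge> dd u \<or> d = \<infinity>" using assms(3) by (cases d) auto
  have nlt: "\<not> d + ereal (w u v) < Dv st s"
    using r tri assms(2) by auto
  have keq: "d + ereal (w u v) = ereal (dd v) \<longleftrightarrow> d = ereal (dd u) \<and> dg u v"
    using r tri euv by (auto simp: dg_def)
  show "Dv (proc_msg w v u s d sb bb st) s = ereal (dd v)" using nlt assms(2) by (simp add: PM_D)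
  show "NH (proc_msg w v u s d sb bb st) s = (NH st s - {u}) \<union> (if d = ereal (dd u) \<and> dg u v then {u} else {})"
    using nlt keq assms(2) by (auto simp: PM_NH)
  assume dok: "d = ereal (dd u)"
  have k2: "d - ereal (w u v) = ereal (dd v) \<longleftrightarrow> dg v u"
    using dok assms(1) ws by (auto simp: dg_def)
  have k3: "dg v u \<Longrightarrow> \<not> dg u v" using dg_lt[of v u] dg_lt[of u v] by auto
  show "PH (proc_msg w v u s d sb bb st) s = (PH st s - {u}) \<union> (if dg v u then {u} else {})"
    using nlt keq k2 k3 assms(2) dok by (auto simp: PM_PH)
qed

lemma step_other:
  "t \<noteq> s \<Longrightarrow> Dv (proc_msg w v u t d sb bb st) s = Dv st s \<and> NH (proc_msg w v u t d sb bb st) s = NH st s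
     \<and> PH (proc_msg w v u t d sb bb st) s = PH st s"
  by (simp add: PM_D PM_NH PM_PH)

lemma NH_fold:
  assumes "Dv st s = ereal (dd v)" "\<And>u t. (u, t) \<in> set xs \<Longrightarrow> E v u" "\<And>u. Dv (gg u) s \<ge> ereal (dd u)"
  shows "Dv (fold (stp gg v) xs st) s = ereal (dd v) \<and>
    NH (fold (stp gg v) xs st) s = (NH st s - {u. (u, s) \<in> set xs}) \<union>
      {u. (u, s) \<in> set xs \<and> Dv (gg u) s = ereal (dd u) \<and> dg u v}"
  using assms(1,2)
proof (induction xs arbitrary: st)
  case Nil then show ?case by simp
next
  case (Cons a xs)
  obtain u t where a: "a = (u, t)" by (cases a)
  let ?st = "stp gg v a st"
  have euv: "E v u" using Cons.prems(2) a by auto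
  have st1: "Dv ?st s = ereal (dd v) \<and> NH ?st s = (NH st s - (if t = s then {u} else {})) \<union>
      (if t = s \<and> Dv (gg u) s = ereal (dd u) \<and> dg u v then {u} else {})"
  proof (cases "t = s")
    case True
    then show ?thesis using step_s(1,2)[OF euv Cons.prems(1) assms(3)[of u]] a by (simp add: stp_def)
  next
    case False
    then show ?thesis using step_other[OF False] Cons.prems(1) a by (simp add: stp_def)
  qed
  have ih: "Dv (fold (stp gg v) xs ?st) s = ereal (dd v) \<and>
    NH (fold (stp gg v) xs ?st) s = (NH ?st s - {u. (u, s) \<in> set xs}) \<union>
      {u. (u, s) \<in> set xs \<and> Dv (gg u) s = ereal (dd u) \<and> dg u v}"
  proof -
    have p2: "\<And>u t. (u, t) \<in> set xs \<Longrightarrow> E v u" using Cons.prems(2) by (metis list.set_intros(2))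
    show ?thesis using Cons.IH[OF conjunct1[OF st1] p2] by simp
  qed
  show ?case using ih st1 a by auto
qed

lemma PH_fold:
  assumes "Dv st s = ereal (dd v)" "\<And>u t. (u, t) \<in> set xs \<Longrightarrow> E v u" "\<And>u. Dv (gg u) s = ereal (dd u)"
  shows "PH (fold (stp gg v) xs st) s = (PH st s - {u. (u, s) \<in> set xs}) \<union> {u. (u, s) \<in> set xs \<and> dg v u}"
  using assms(1,2)
proof (induction xs arbitrary: st)
  case Nil then show ?case by simp
next
  case (Cons a xs)
  obtain u t where a: "a = (u, t)" by (cases a)
  let ?st = "stp gg v a st"
  have euv: "E v u" using Cons.prems(2) a by auto
  have ge: "Dv (gg u) s \<ge> ereal (dd u)" using assms(3) by simp
  have st1: "Dv ?st s = ereal (dd v) \<and> PH ?st s = (PH st s - (if t = s then {u} else {})) \<union>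
      (if t = s \<and> dg v u then {u} else {})"
  proof (cases "t = s")
    case True
    then show ?thesis using step_s(1)[OF euv Cons.prems(1) ge] step_s(3)[OF euv Cons.prems(1) ge assms(3)[of u]] a
      by (simp add: stp_def)
  next
    case False
    then show ?thesis using step_other[OF False] Cons.prems(1) a by (simp add: stp_def)
  qed
  have ih: "PH (fold (stp gg v) xs ?st) s = (PH ?st s - {u. (u, s) \<in> set xs}) \<union> {u. (u, s) \<in> set xs \<and> dg v u}"
  proof -
    have p2: "\<And>u t. (u, t) \<in> set xs \<Longrightarrow> E v u" using Cons.prems(2) by (metis list.set_intros(2))
    show ?thesis using Cons.IH[OF conjunct1[OF st1] p2] by simp
  qed
  show ?case using ih st1 a by auto
qed

lemma stored_fold:
  "x \<noteq> v \<Longrightarrow> Sv (fold (stp gg v) xs st) x s = (if (x, s) \<in> set xs then Sv (gg x) x s else Sv st x s)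
     \<and> Bv (fold (stp gg v) xs st) x s = (if (x, s) \<in> set xs then Bv (gg x) x s else Bv st x s)"
proof (induction xs arbitrary: st)
  case Nil then show ?case by simp
next
  case (Cons a xs)
  obtain u t where a: "a = (u, t)" by (cases a)
  have "Sv (stp gg v a st) x s = (if x = u \<and> s = t then Sv (gg u) u t else Sv st x s)"
       "Bv (stp gg v a st) x s = (if x = u \<and> s = t then Bv (gg u) u t else Bv st x s)"
    using PM_S[OF Cons.prems] PM_B[OF Cons.prems] a by (simp_all add: stp_def)
  then show ?case using Cons.IH[OF Cons.prems, of "stp gg v a st"] a by auto
qed

lemma g_Suc_fold: "g (Suc k) v = fold (stp (g k) v) (ord k v) (g k v)"
  by (subst g_Suc) (simp add: pst_def)

lemma U_ord: "{u. (u, s) \<in> set (ord k v)} = {u. E v u}"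
  using set_ord by auto

lemma NH_correct: "maxhop E w s v + 1 \<le> k \<Longrightarrow> NH (pst k v j) s = {u. dg u v}"
proof -
  assume a: "maxhop E w s v + 1 \<le> k"
  then obtain k' where k: "k = Suc k'" by (cases k) auto
  have ok: "Dv (g m u) s = ereal (dd u)" if "dg u v" "maxhop E w s v \<le> m" for u m
    using D_correct_g mh_dg[OF that(1)] that(2) by simp
  have Dk': "Dv (g k' v) s = ereal (dd v)" using D_correct_g a k by simp
  have "NH (g k v) s = (NH (g k' v) s - {u. E v u}) \<union> {u. E v u \<and> Dv (g k' u) s = ereal (dd u) \<and> dg u v}"
    using NH_fold[OF Dk', of "ord k' v" "g k'"] D_lb_g U_ord unfolding k g_Suc_fold
    by (auto simp: set_ord)
  also have "\<dots> = {u. dg u v}"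
  proof -
    have "NH (g k' v) s \<subseteq> {u. E v u}" using wf_all[of v k' 0] by (simp add: wf_def pst_0)
    moreover have "dg u v \<Longrightarrow> E v u" for u using sym dgE by blast
    ultimately show ?thesis using ok a k by auto
  qed
  finally have Nk: "NH (g k v) s = {u. dg u v}" .
  have Dk: "Dv (g k v) s = ereal (dd v)" using D_correct_g a by simp
  have "NH (pst k v j) s = (NH (g k v) s - {u. (u, s) \<in> set (take j (ord k v))}) \<union>
      {u. (u, s) \<in> set (take j (ord k v)) \<and> Dv (g k u) s = ereal (dd u) \<and> dg u v}"
    using NH_fold[OF Dk, of "take j (ord k v)" "g k"] D_lb_g unfolding pst_def
    by (auto dest: set_take_ord)
  also have "\<dots> = {u. dg u v}" using Nk ok a by auto
  finally show ?thesis .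
qed

lemma PH_correct: "hopdiam E w + 1 \<le> k \<Longrightarrow> PH (pst k v j) s = {u. dg v u}"
proof -
  assume a: "hopdiam E w + 1 \<le> k"
  then obtain k' where k: "k = Suc k'" by (cases k) auto
  have ok: "Dv (g m u) s = ereal (dd u)" if "hopdiam E w \<le> m" for u m
    using D_correct_g mh_le[of u] that by simp
  have Dk': "Dv (g k' v) s = ereal (dd v)" using ok a k by simp
  have "PH (g k v) s = (PH (g k' v) s - {u. E v u}) \<union> {u. E v u \<and> dg v u}"
    using PH_fold[OF Dk', of "ord k' v" "g k'"] ok a k U_ord unfolding k g_Suc_fold
    by (auto simp: set_ord)
  also have "\<dots> = {u. dg v u}"
  proof -
    have "PH (g k' v) s \<subseteq> {u. E v u}" using wf_all[of v k' 0] by (simp add: wf_def pst_0)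
    moreover have "dg v u \<Longrightarrow> E v u" for u using dgE by blast
    ultimately show ?thesis by auto
  qed
  finally have Nk: "PH (g k v) s = {u. dg v u}" .
  have Dk: "Dv (g k v) s = ereal (dd v)" using ok a by simp
  have "PH (pst k v j) s = (PH (g k v) s - {u. (u, s) \<in> set (take j (ord k v))}) \<union>
      {u. (u, s) \<in> set (take j (ord k v)) \<and> dg v u}"
    using PH_fold[OF Dk, of "take j (ord k v)" "g k"] ok a unfolding pst_def
    by (auto dest: set_take_ord)
  also have "\<dots> = {u. dg v u}" using Nk by auto
  finally show ?thesis .
qed

lemma stored:
  assumes "E v x" "k = Suc k'"
  shows "(Sv (pst k v j) x s, Bv (pst k v j) x s) \<in>
     {(Sv (pst k' x (length (ord k' x))) x s, Bv (pst k' x (length (ord k' x))) x s),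
      (Sv (pst k' x 0) x s, Bv (pst k' x 0) x s)}"
proof -
  have xv: "x \<noteq> v" using assms(1) irr by auto
  have mem: "(x, s) \<in> set (ord k' v)" using set_ord assms(1) by simp
  have gk: "Sv (g k v) x s = Sv (g k' x) x s \<and> Bv (g k v) x s = Bv (g k' x) x s"
    using stored_fold[OF xv, of "g k'" "ord k' v" "g k' v"] mem unfolding assms(2) g_Suc_fold by simp
  have "Sv (pst k v j) x s = (if (x, s) \<in> set (take j (ord k v)) then Sv (g k x) x s else Sv (g k v) x s)
     \<and> Bv (pst k v j) x s = (if (x, s) \<in> set (take j (ord k v)) then Bv (g k x) x s else Bv (g k v) x s)"
    using stored_fold[OF xv] unfolding pst_def by blast
  then show ?thesis using gk unfolding assms(2) g_Suc[symmetric] pst_0 by auto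
qed

end


context ALG begin

lemma mh_s: "maxhop E w s s = 0" by (simp add: maxhop_def)

lemma SC: "maxhop E w s v + 1 \<le> k \<Longrightarrow> Sv (pst k v j) v s = real (card (DP s v))"
proof (induction k arbitrary: v j)
  case 0 then show ?case by simp
next
  case (Suc k)
  show ?case
  proof (cases "v = s")
    case True
    then show ?thesis using wf_all[of v "Suc k" j] by (simp add: wf_def DP_self)
  next
    case False
    have "Sv (pst (Suc k) v j) v s = (\<Sum>y\<in>NH (pst (Suc k) v j) s. Sv (pst (Suc k) v j) y s)"
      using wf_all[of v "Suc k" j] False by (simp add: wf_def)
    also have "\<dots> = (\<Sum>y\<in>{u. dg u v}. Sv (pst (Suc k) v j) y s)"
      using NH_correct[OF Suc.prems] by simp
    also have "\<dots> = (\<Sum>y\<in>{u. dg u v}. real (card (DP s y)))"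
    proof (rule sum.cong)
      fix y assume "y \<in> {u. dg u v}"
      then have dy: "dg y v" by simp
      then have e: "E v y" using sym dgE by blast
      have mh: "maxhop E w s y + 1 \<le> k" using mh_dg[OF dy] Suc.prems by simp
      show "Sv (pst (Suc k) v j) y s = real (card (DP s y))"
        using stored[where k="Suc k" and k'=k and j=j, OF e refl] Suc.IH[OF mh, of 0] Suc.IH[OF mh, of "length (ord k y)"]
        by (simp only: insert_iff singleton_iff prod.inject empty_iff) blast
    qed simp
    also have "\<dots> = real (card (DP s v))"
    proof -
      have "card (DP s v) = (\<Sum>x\<in>{x. dg x v}. card (DP s x))" using card_DP_snoc[of s v] False by auto
      then show ?thesis by (simp add: of_nat_sum)
    qed
    finally show ?thesis .
  qed
qed

lemma BC: "v \<noteq> s \<Longrightarrow> 2 * hopdiam E w + 1 \<le> k + maxhop E w s v \<Longrightarrow> Bv (pst k v j) v s = bc E w v s"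
proof (induction k arbitrary: v j)
  case 0 then show ?case using mh_le[of v] by simp
next
  case (Suc k)
  let ?H = "hopdiam E w"
  have mv: "maxhop E w s v \<le> ?H" by (rule mh_le)
  have "Bv (pst (Suc k) v j) v s = Sv (pst (Suc k) v j) v s * (\<Sum>y\<in>PH (pst (Suc k) v j) s.
      if Sv (pst (Suc k) v j) y s = 0 then 0 else (Bv (pst (Suc k) v j) y s + 1) / Sv (pst (Suc k) v j) y s)"
    using wf_all[of v "Suc k" j] by (simp add: wf_def)
  also have "Sv (pst (Suc k) v j) v s = real (card (DP s v))"
    using SC[of v "Suc k" j] Suc.prems mv by simp
  also have "PH (pst (Suc k) v j) s = {u. dg v u}"
    using PH_correct[of "Suc k" v j] Suc.prems mv by simp
  also have "(\<Sum>y\<in>{u. dg v u}.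
      if Sv (pst (Suc k) v j) y s = 0 then 0 else (Bv (pst (Suc k) v j) y s + 1) / Sv (pst (Suc k) v j) y s)
     = (\<Sum>y\<in>{u. dg v u}. (bc E w y s + 1) / real (card (DP s y)))"
  proof (rule sum.cong)
    fix y assume "y \<in> {u. dg v u}"
    then have dy: "dg v y" by simp
    then have e: "E v y" using dgE by blast
    have lt: "maxhop E w s v < maxhop E w s y" using mh_dg[OF dy] .
    have my: "maxhop E w s y \<le> ?H" by (rule mh_le)
    have ys: "y \<noteq> s" using lt mh_s by auto
    have sc: "maxhop E w s y + 1 \<le> k" using lt my mv Suc.prems by linarith
    have bc: "2 * ?H + 1 \<le> k + maxhop E w s y" using lt Suc.prems by linarith
    have pos: "real (card (DP s y)) \<noteq> 0" using card_DP_pos by simp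
    have h: "Sv (pst k y j') y s = real (card (DP s y)) \<and> Bv (pst k y j') y s = bc E w y s" for j'
      using SC[OF sc] Suc.IH[OF ys bc] by simp
    have "Sv (pst (Suc k) v j) y s = real (card (DP s y)) \<and> Bv (pst (Suc k) v j) y s = bc E w y s"
      using stored[where k="Suc k" and k'=k and j=j, OF e refl] h[of 0] h[of "length (ord k y)"]
      by (simp only: insert_iff singleton_iff prod.inject empty_iff) blast
    then show "(if Sv (pst (Suc k) v j) y s = 0 then 0 else (Bv (pst (Suc k) v j) y s + 1) / Sv (pst (Suc k) v j) y s)
       = (bc E w y s + 1) / real (card (DP s y))"
      using pos by simp
  qed simp
  also have "real (card (DP s v)) * \<dots> = bc E w v s" by (rule bc_rec[symmetric])
  finally show ?case .
qed

end

theorem lemma4: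
  fixes E :: "'v::finite \<Rightarrow> 'v \<Rightarrow> bool" and w :: "'v \<Rightarrow> 'v \<Rightarrow> real"
    and ord :: "nat \<Rightarrow> 'v \<Rightarrow> ('v \<times> 'v) list"
    and v s :: 'v and k j :: nat
  assumes "weighted_graph E w" and "connected_graph E"
    and "\<And>k' v'. distinct (ord k' v') \<and> set (ord k' v') = {(u, t). E v' u}"
    and "s \<noteq> v"
    and "2 * hopdiam E w + 1 \<le> k"
    and "j \<le> length (ord k v)"
  shows "Bv (process_list w (exec w ord k) v (take j (ord k v)) (exec w ord k v)) v s = bc E w v s"
proof -
  interpret ALG E w s ord
    using assms(1,2,3) by (unfold_locales) auto
  have "Bv (pst k v j) v s = bc E w v s"
    using BC[of v k j] assms(4,5) by simp
  then show ?thesis by (simp add: pst_def process_list_fold)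
qed


end
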